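(* Let $k_p, k_s, n_s$ be positive integers with $n_s \ge k_s$, and let $\epsilon_s \in [0,1)$. Define \[ \epsilon_p = \Pr\bigl(S < k_s\bigr), \qquad S \sim \mathrm{Binomial}(n_s, 1-\epsilon_s), \] i.e. $\epsilon_p = \sum_{j=n_s-k_s+1}^{n_s}\binom{n_s}{j}\epsilon_s^{\,j}(1-\epsilon_s)^{n_s-j}$. Let \[ \mathbb{E}\bigl[T^{\mathrm{IIR}}\bigr] = \frac{k_p\, k_s}{1-\epsilon_s}, \qquad \mathbb{E}\bigl[T^{\mathrm{FR}}\bigr] = \frac{k_p\, n_s}{1-\epsilon_p}. \] Then $\mathbb{E}\bigl[T^{\mathrm{FR}}\bigr] \ge \mathbb{E}\bigl[T^{\mathrm{IIR}}\bigr]$.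
   Context: Point-to-point transmission model: a chunk consists of $k_p$ packets, each consisting of $k_s$ symbols. The physical channel is a memoryless symbol erasure channel that erases each transmitted symbol independently with probability $\epsilon_s$. A packet can be decoded once any $k_s$ of its transmitted coded symbols are received, and a chunk once any $k_p$ of its coded packets are received. In the Infinite Incremental Redundancy (IIR) scheme, coded symbols of a packet are sent until $k_s$ are received (no packet erasures). The number of channel uses $T^{\mathrm{IIR}}$ to decode the chunk is then negative binomial with parameters $(k_p k_s, 1-\epsilon_s)$, so its mean is $k_p k_s/(1-\epsilon_s)$. In the Fixed Redundancy (FR) scheme, each packet is sent using exactly $n_s$ coded symbols and is erased with probability $\epsilon_p$ (the probability that fewer than $k_s$ of the $n_s$ symbols are received). Coded packets are sent ratelessly until $k_p$ packets are received. The number of channel uses $T^{\mathrm{FR}}$ therefore has mean $k_p n_s/(1-\epsilon_p)$. Note that $\epsilon_p<1$ because $\epsilon_s<1$. *)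

theory Defs
  imports "HOL-Probability.Probability"
begin

definition eps_p :: "nat \<Rightarrow> nat \<Rightarrow> real \<Rightarrow> real" where
  "eps_p ns ks eps_s = measure_pmf.prob (binomial_pmf ns (1 - eps_s)) {S. S < ks}"

definition E_T_IIR :: "nat \<Rightarrow> nat \<Rightarrow> real \<Rightarrow> real" where
  "E_T_IIR kp ks eps_s = real kp * real ks / (1 - eps_s)"

definition E_T_FR :: "nat \<Rightarrow> nat \<Rightarrow> nat \<Rightarrow> real \<Rightarrow> real" where
  "E_T_FR kp ks ns eps_s = real kp * real ns / (1 - eps_p ns ks eps_s)"

end

theory Submission
  imports Defs
begin

lemma binom_mean:
  fixes p q :: real
  shows "(\<Sum>k\<le>n. real k * (real (n choose k) * p^k * q^(n-k))) = real n * p * (p+q)^(n-1)"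
proof (cases n)
  case 0 then show ?thesis by simp
next
  case (Suc m)
  have "(\<Sum>k\<le>Suc m. real k * (real (Suc m choose k) * p^k * q^(Suc m-k)))
      = (\<Sum>j\<le>m. real (Suc j) * (real (Suc m choose Suc j) * p^(Suc j) * q^(m-j)))"
    by (subst sum.atMost_Suc_shift) simp
  also have "\<dots> = (\<Sum>j\<le>m. real (Suc m) * p * (real (m choose j) * p^j * q^(m-j)))"
  proof (rule sum.cong[OF refl])
    fix j
    have "real (Suc j) * real (Suc m choose Suc j) = real (Suc m) * real (m choose j)"
      using Suc_times_binomial[of j m] by (metis of_nat_mult)
    then show "real (Suc j) * (real (Suc m choose Suc j) * p^(Suc j) * q^(m-j)) = real (Suc m) * p * (real (m choose j) * p^j * q^(m-j))"
    proof -
      have "real (Suc j) * (real (Suc m choose Suc j) * p^(Suc j) * q^(m-j))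
          = (real (Suc j) * real (Suc m choose Suc j)) * (p^(Suc j) * q^(m-j))"
        by (simp only: mult_ac)
      also have "\<dots> = (real (Suc m) * real (m choose j)) * (p^(Suc j) * q^(m-j))"
        by (simp only: \<open>real (Suc j) * real (Suc m choose Suc j) = real (Suc m) * real (m choose j)\<close>)
      also have "\<dots> = real (Suc m) * p * (real (m choose j) * p^j * q^(m-j))"
        by (simp only: mult_ac power_Suc)
      finally show ?thesis .
    qed
  qed
  also have "\<dots> = real (Suc m) * p * (p+q)^m"
    by (simp add: sum_distrib_left[symmetric] binomial_ring atLeast0AtMost)
  finally show ?thesis using Suc by simp
qed

theorem theorem1:
  fixes kp ks ns :: nat and eps_s :: real
  assumes "kp > 0" "ks > 0" "ns > 0" "ns \<ge> ks"
    and "0 \<le> eps_s" "eps_s < 1"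
  shows "E_T_FR kp ks ns eps_s \<ge> E_T_IIR kp ks eps_s"
proof -
  define q where "q = 1 - eps_s"
  have q: "0 < q" "q \<le> 1" using assms unfolding q_def by auto
  define f where "f k = real (ns choose k) * q^k * (1-q)^(ns-k)" for k
  have fnn: "f k \<ge> 0" for k unfolding f_def using q by simp
  have pm: "pmf (binomial_pmf ns q) k = f k" for k
    using q unfolding f_def by simp
  have ep: "eps_p ns ks eps_s = (\<Sum>k<ks. f k)"
    unfolding eps_p_def q_def[symmetric]
    by (simp add: lessThan_def[symmetric] measure_measure_pmf_finite pm)
  have tot: "(\<Sum>k\<le>ns. f k) = 1"
    unfolding f_def using binomial_ring[of q "1-q" ns] by (simp add: atLeast0AtMost)
  have split: "{..ns} = {..<ks} \<union> {ks..ns}" using assms by auto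
  have "(\<Sum>k\<le>ns. f k) = (\<Sum>k<ks. f k) + (\<Sum>k\<in>{ks..ns}. f k)"
    unfolding split by (subst sum.union_disjoint) auto
  hence one: "1 - eps_p ns ks eps_s = (\<Sum>k\<in>{ks..ns}. f k)" using tot ep by simp
  have "f ns \<le> (\<Sum>k\<in>{ks..ns}. f k)"
    using assms fnn by (intro member_le_sum) auto
  moreover have "f ns > 0" unfolding f_def using q by simp
  ultimately have pos: "1 - eps_p ns ks eps_s > 0" using one by simp
  have "real ks * (\<Sum>k\<in>{ks..ns}. f k) = (\<Sum>k\<in>{ks..ns}. real ks * f k)"
    by (simp add: sum_distrib_left)
  also have "\<dots> \<le> (\<Sum>k\<in>{ks..ns}. real k * f k)"
    using fnn by (intro sum_mono mult_right_mono) auto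
  also have "\<dots> \<le> (\<Sum>k\<le>ns. real k * f k)"
    using fnn by (intro sum_mono2) auto
  also have "\<dots> = real ns * q"
    using binom_mean[of ns q "1-q"] by (simp add: f_def)
  finally have mk: "real ks * (1 - eps_p ns ks eps_s) \<le> real ns * q" using one by simp
  have "real ks / q \<le> real ns / (1 - eps_p ns ks eps_s)"
    using mk pos q by (simp add: divide_simps mult.commute)
  hence "real kp * (real ks / q) \<le> real kp * (real ns / (1 - eps_p ns ks eps_s))"
    by (intro mult_left_mono) auto
  thus ?thesis unfolding E_T_FR_def E_T_IIR_def q_def[symmetric] by simp
qed
end
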